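(* Let $(\Sigma,\theta)$ be a Noetherian space. The tree topology on the set $T(\Sigma)$ of finite trees over $\Sigma$ is the least fixed point of the map $K$ sending a topology $\tau$ on $T(\Sigma)$ to the topology generated by the sets $\uparrow_{\le_T}U\langle V\rangle$ with $U\in\theta$ and $V$ open in $T(\Sigma)^*$ for the subword topology induced by $\tau$; moreover $K$ is a topology expander.
   Context: A finite tree over $\Sigma$ is $a\langle t_1\cdots t_n\rangle$ with $a\in\Sigma$, $n\ge0$ and $t_i$ finite trees. $\le$ is the specialisation preorder of $\theta$. For a topological space $(A,\sigma)$, the subword topology on $A^*$ is generated by $A^*U_1A^*\cdots A^*U_nA^*$ with $U_i\in\sigma$; Higman's ordering $\le^*$ on $A^*$ relative to a preorder on $A$: $u\le^*w$ iff a strictly increasing map $h$ of positions satisfies $u_i\le w_{h(i)}$. Kruskal's embedding $\le_T$ on $T(\Sigma)$: $s\le_T t$ iff, writing $t=a\langle t_1\cdots t_n\rangle$, either $s\le_T t_i$ for some $i$, or $s=b\langle s_1\cdots s_m\rangle$ with $b\le a$ and $s_1\cdots s_m\le_T^* t_1\cdots t_n$. For $U\subseteq\Sigma$, $V\subseteq T(\Sigma)^*$, $U\langle V\rangle$ is the set of trees $a\langle w\rangle$ with $a\in U$, $w\in V$; $\diamond U\langle V\rangle$ is the set of trees having a subtree in $U\langle V\rangle$. The tree topology is the coarsest topology $\tau$ on $T(\Sigma)$ such that $\diamond U\langle V\rangle$ is open for every $U\in\theta$ and every $V$ open in the subword topology on $T(\Sigma)^*$ built from $\tau$. Noetherian: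 every subset compact. A refinement function is a map from topologies on a set $X$ to topologies on $X$, monotone and preserving Noetherianity; $\tau|_H$ is the topology generated by $\{U\cap H:U\in\tau\}$; a topology expander is a refinement function $R$ with $R(\tau)|_H=R(\tau|_H)|_H$ for all Noetherian $\tau\subseteq R(\tau)$ and all $H$ closed in $\tau$. *)

theory Defs
  imports "HOL-Analysis.Abstract_Topology" "HOL-Library.Sublist"
begin

datatype 'a ftree = Node 'a "'a ftree list"

definition gen_top :: "'b set set \<Rightarrow> 'b topology" where
  "gen_top S = topology_generated_by (insert UNIV S)"

definition top_on_univ :: "'b topology \<Rightarrow> bool" where
  "top_on_univ \<tau> \<longleftrightarrow> topspace \<tau> = UNIV"

definition coarser :: "'b topology \<Rightarrow> 'b topology \<Rightarrow> bool" where
  "coarser \<tau>1 \<tau>2 \<longleftrightarrow> (\<forall>S. openin \<tau>1 S \<longrightarrow> openin \<tau>2 S)"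

definition noetherian :: "'b topology \<Rightarrow> bool" where
  "noetherian \<tau> \<longleftrightarrow> (\<forall>S. S \<subseteq> topspace \<tau> \<longrightarrow> compactin \<tau> S)"

definition spec_le :: "'b topology \<Rightarrow> 'b \<Rightarrow> 'b \<Rightarrow> bool" where
  "spec_le \<theta> x y \<longleftrightarrow> (\<forall>U. openin \<theta> U \<longrightarrow> x \<in> U \<longrightarrow> y \<in> U)"

text \<open>The set A* U1 A* ... A* Un A*.\<close>
definition word_pattern :: "'b set list \<Rightarrow> 'b list set" where
  "word_pattern Us = {w. \<exists>xs. subseq xs w \<and> list_all2 (\<in>) xs Us}"

definition subword_topology :: "'b topology \<Rightarrow> 'b list topology" where
  "subword_topology \<sigma> = gen_top {word_pattern Us | Us. \<forall>U\<in>set Us. openin \<sigma> U}"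

inductive tree_emb :: "('a \<Rightarrow> 'a \<Rightarrow> bool) \<Rightarrow> 'a ftree \<Rightarrow> 'a ftree \<Rightarrow> bool"
  for le :: "'a \<Rightarrow> 'a \<Rightarrow> bool" where
  sub: "t \<in> set ts \<Longrightarrow> tree_emb le s t \<Longrightarrow> tree_emb le s (Node a ts)"
| root: "le b a \<Longrightarrow> list_emb (tree_emb le) ss ts \<Longrightarrow> tree_emb le (Node b ss) (Node a ts)"
  monos list_emb_mono

definition node_set :: "'a set \<Rightarrow> 'a ftree list set \<Rightarrow> 'a ftree set" where
  "node_set U V = {Node a w | a w. a \<in> U \<and> w \<in> V}"

fun subtrees :: "'a ftree \<Rightarrow> 'a ftree set" where
  "subtrees (Node a ts) = insert (Node a ts) (\<Union>t\<in>set ts. subtrees t)"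

definition diamond :: "'a ftree set \<Rightarrow> 'a ftree set" where
  "diamond S = {t. subtrees t \<inter> S \<noteq> {}}"

definition upclosure :: "('b \<Rightarrow> 'b \<Rightarrow> bool) \<Rightarrow> 'b set \<Rightarrow> 'b set" where
  "upclosure le S = {t. \<exists>s\<in>S. le s t}"

definition tree_top_prop :: "'a topology \<Rightarrow> 'a ftree topology \<Rightarrow> bool" where
  "tree_top_prop \<theta> \<tau> \<longleftrightarrow> (\<forall>U V. openin \<theta> U \<longrightarrow> openin (subword_topology \<tau>) V
       \<longrightarrow> openin \<tau> (diamond (node_set U V)))"

definition is_tree_topology :: "'a topology \<Rightarrow> 'a ftree topology \<Rightarrow> bool" where
  "is_tree_topology \<theta> \<tau> \<longleftrightarrow> top_on_univ \<tau> \<and> tree_top_prop \<theta> \<tau> \<and>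
     (\<forall>\<tau>'. top_on_univ \<tau>' \<longrightarrow> tree_top_prop \<theta> \<tau>' \<longrightarrow> coarser \<tau> \<tau>')"

definition tree_topology :: "'a topology \<Rightarrow> 'a ftree topology" where
  "tree_topology \<theta> = (THE \<tau>. is_tree_topology \<theta> \<tau>)"

definition K_map :: "'a topology \<Rightarrow> 'a ftree topology \<Rightarrow> 'a ftree topology" where
  "K_map \<theta> \<tau> = gen_top {upclosure (tree_emb (spec_le \<theta>)) (node_set U V) | U V.
       openin \<theta> U \<and> openin (subword_topology \<tau>) V}"

definition restrict_top :: "'b topology \<Rightarrow> 'b set \<Rightarrow> 'b topology" where
  "restrict_top \<tau> H = gen_top {U \<inter> H | U. openin \<tau> U}"

definition refinement_function :: "('b topology \<Rightarrow> 'b topology) \<Rightarrow> bool" where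
  "refinement_function R \<longleftrightarrow>
     (\<forall>\<tau>. top_on_univ \<tau> \<longrightarrow> top_on_univ (R \<tau>)) \<and>
     (\<forall>\<tau>1 \<tau>2. top_on_univ \<tau>1 \<longrightarrow> top_on_univ \<tau>2 \<longrightarrow> coarser \<tau>1 \<tau>2 \<longrightarrow> coarser (R \<tau>1) (R \<tau>2)) \<and>
     (\<forall>\<tau>. top_on_univ \<tau> \<longrightarrow> noetherian \<tau> \<longrightarrow> noetherian (R \<tau>))"

definition topology_expander :: "('b topology \<Rightarrow> 'b topology) \<Rightarrow> bool" where
  "topology_expander R \<longleftrightarrow> refinement_function R \<and>
     (\<forall>\<tau> H. top_on_univ \<tau> \<longrightarrow> noetherian \<tau> \<longrightarrow> coarser \<tau> (R \<tau>) \<longrightarrow> closedin \<tau> H \<longrightarrow>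
        restrict_top (R \<tau>) H = restrict_top (R (restrict_top \<tau> H)) H)"

definition least_fixpoint :: "('b topology \<Rightarrow> 'b topology) \<Rightarrow> 'b topology \<Rightarrow> bool" where
  "least_fixpoint R \<tau> \<longleftrightarrow> top_on_univ \<tau> \<and> R \<tau> = \<tau> \<and>
     (\<forall>\<tau>'. top_on_univ \<tau>' \<longrightarrow> R \<tau>' = \<tau>' \<longrightarrow> coarser \<tau> \<tau>')"

end

theory Submission
  imports Defs "HOL-Analysis.Function_Topology" "HOL-Library.Ramsey" "HOL-Library.Sublist"
begin


lemma openin_gen_top: "openin (gen_top S) U \<longleftrightarrow> generate_topology_on (insert UNIV S) U"
  by (simp add: gen_top_def openin_topology_generated_by_iff)

lemma topspace_gen_top[simp]: "topspace (gen_top S) = UNIV"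
  by (auto simp: gen_top_def topology_generated_by_topspace)

lemma top_on_univ_gen_top[simp]: "top_on_univ (gen_top S)"
  by (simp add: top_on_univ_def)

lemma gen_top_basis: "U \<in> S \<Longrightarrow> openin (gen_top S) U"
  by (simp add: openin_gen_top generate_topology_on.Basis)

lemma gen_top_UNIV: "openin (gen_top S) UNIV"
  by (simp add: openin_gen_top generate_topology_on.Basis)

lemma gen_top_induct:
  assumes "openin (gen_top S) U"
    and "P UNIV" and "P {}" and "\<And>a b. P a \<Longrightarrow> P b \<Longrightarrow> P (a \<inter> b)"
    and "\<And>K. (\<And>k. k \<in> K \<Longrightarrow> P k) \<Longrightarrow> P (\<Union>K)"
    and "\<And>U. U \<in> S \<Longrightarrow> P U"
  shows "P U"
proof -
  have "generate_topology_on (insert UNIV S) U" using assms(1) by (simp add: openin_gen_top)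
  then show ?thesis
    by (induction rule: generate_topology_on.induct) (use assms in auto)
qed

lemma gen_top_minimal:
  assumes "top_on_univ \<tau>" "\<And>U. U \<in> S \<Longrightarrow> openin \<tau> U"
  shows "coarser (gen_top S) \<tau>"
  unfolding coarser_def
proof (intro allI impI)
  fix U assume "openin (gen_top S) U"
  then show "openin \<tau> U"
    by (rule gen_top_induct) (use assms in \<open>auto simp: top_on_univ_def
       intro: openin_Union, metis openin_topspace\<close>)
qed

lemma gen_top_mono: "S \<subseteq> S' \<Longrightarrow> coarser (gen_top S) (gen_top S')"
  by (rule gen_top_minimal) (auto intro: gen_top_basis)

lemma coarser_refl: "coarser t t" by (simp add: coarser_def)
lemma coarser_trans: "coarser a b \<Longrightarrow> coarser b c \<Longrightarrow> coarser a c" by (simp add: coarser_def)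
lemma coarser_antisym: "coarser a b \<Longrightarrow> coarser b a \<Longrightarrow> a = b"
  by (simp add: coarser_def topology_eq) blast

definition fup :: "'b set set \<Rightarrow> bool" where
  "fup F \<longleftrightarrow> (\<exists>F'\<subseteq>F. finite F' \<and> \<Union>F' = \<Union>F)"

lemma noeth_gen:
  assumes fin: "\<And>C. C \<subseteq> S \<Longrightarrow> fup C"
  shows "noetherian (gen_top S)"
  unfolding noetherian_def
proof (intro allI impI)
  fix Y
  define B where "B = insert UNIV S"
  have finB: "\<exists>C'. finite C' \<and> C' \<subseteq> C \<and> Y \<subseteq> \<Union>C'" if "C \<subseteq> B" "Y \<subseteq> \<Union>C" for C
  proof (cases "UNIV \<in> C")
    case True then show ?thesis by (intro exI[of _ "{UNIV}"]) auto
  next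
    case False
    then have "C \<subseteq> S" using that by (auto simp: B_def)
    then obtain F' where "F' \<subseteq> C" "finite F'" "\<Union>F' = \<Union>C" using fin[of C] unfolding fup_def by blast
    then show ?thesis using that by (intro exI[of _ F']) auto
  qed
  have fin1: "(finite intersection_of (\<lambda>x. x \<in> B)) = (finite' intersection_of (\<lambda>x. x \<in> B))"
  proof (intro ext iffI)
    fix T assume "(finite intersection_of (\<lambda>x. x \<in> B)) T"
    then obtain F where "finite F" "F \<subseteq> B" "\<Inter>F = T" by (auto simp: intersection_of_def)
    then show "(finite' intersection_of (\<lambda>x. x \<in> B)) T"
    proof (cases "F = {}")
      case True
      then show ?thesis using \<open>\<Inter>F = T\<close> unfolding intersection_of_def
        by (intro exI[of _ "{UNIV}"]) (auto simp: B_def)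
    next
      case False
      then show ?thesis using \<open>finite F\<close> \<open>F \<subseteq> B\<close> \<open>\<Inter>F = T\<close> unfolding intersection_of_def
        by blast
    qed
  next
    fix T assume "(finite' intersection_of (\<lambda>x. x \<in> B)) T"
    then show "(finite intersection_of (\<lambda>x. x \<in> B)) T"
      by (auto simp: intersection_of_def)
  qed
  have eqX: "subtopology (gen_top S) Y =
      topology (arbitrary union_of (finite intersection_of (\<lambda>x. x \<in> B) relative_to Y))"
    unfolding topology_eq openin_subbase
  proof (intro allI)
    fix T
    show "openin (subtopology (gen_top S) Y) T =
      (arbitrary union_of (finite intersection_of (\<lambda>x. x \<in> B) relative_to Y)) T"
    proof -
      have "(arbitrary union_of (finite intersection_of (\<lambda>x. x \<in> B) relative_to Y)) T \<longleftrightarrow>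
          ((arbitrary union_of (finite' intersection_of (\<lambda>x. x\<in>B))) relative_to Y) T"
        by (simp only: arbitrary_union_of_relative_to[symmetric] fin1)
      also have "\<dots> \<longleftrightarrow> (\<exists>U. generate_topology_on B U \<and> Y \<inter> U = T)"
        by (simp add: relative_to_def generate_topology_on_eq)
      also have "\<dots> \<longleftrightarrow> openin (subtopology (gen_top S) Y) T"
        by (auto simp: openin_subtopology openin_gen_top B_def)
      finally show ?thesis by simp
    qed
  qed
  have "compact_space (subtopology (gen_top S) Y)"
    by (rule Alexander_subbase_alt[of Y B]) (use finB eqX in \<open>auto simp: B_def\<close>)
  then show "compactin (gen_top S) Y"
    by (simp add: compactin_subspace)
qed

lemma noeth_fup:
  assumes "noetherian \<sigma>" "\<And>G. G \<in> \<G> \<Longrightarrow> openin \<sigma> G"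
  shows "fup \<G>"
proof -
  have "\<Union>\<G> \<subseteq> topspace \<sigma>" using assms(2) openin_subset by blast
  then have "compactin \<sigma> (\<Union>\<G>)" using assms(1) by (simp add: noetherian_def)
  then obtain F where "finite F" "F \<subseteq> \<G>" "\<Union>\<G> \<subseteq> \<Union>F"
    unfolding compactin_def using assms(2) by (metis order_refl)
  then show ?thesis unfolding fup_def by (intro exI[of _ F]) auto
qed



lemma list_emb_comp:
  assumes "list_emb Q ys zs" "list_emb P xs ys" "\<And>x y z. P x y \<Longrightarrow> Q y z \<Longrightarrow> R x z"
  shows "list_emb R xs zs"
  using assms(1,2)
proof (induction arbitrary: xs rule: list_emb.induct)
  case (list_emb_Nil ys)
  then show ?case by (auto dest: list_emb_Nil2)
next
  case (list_emb_Cons ys zs z)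
  then show ?case by blast
next
  case (list_emb_Cons2 y z ys zs)
  show ?case
  proof (cases xs)
    case Nil then show ?thesis by simp
  next
    case (Cons x xs')
    from list_emb_Cons2.prems[unfolded Cons]
    have "(P x y \<and> list_emb P xs' ys) \<or> list_emb P (x#xs') ys"
      by (cases rule: list_emb.cases) auto
    then show ?thesis
    proof
      assume "P x y \<and> list_emb P xs' ys"
      then show ?thesis using list_emb_Cons2 assms(3) Cons by blast
    next
      assume "list_emb P (x#xs') ys"
      then show ?thesis using list_emb_Cons2 Cons by blast
    qed
  qed
qed

lemma list_emb_split:
  assumes "list_emb P xs ys"
  shows "\<exists>zs. subseq zs ys \<and> list_all2 P xs zs"
  using assms
proof (induction rule: list_emb.induct)
  case (list_emb_Nil ys) then show ?case by (intro exI[of _ "[]"]) auto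
next
  case (list_emb_Cons xs ys y) then show ?case by blast
next
  case (list_emb_Cons2 x y xs ys)
  then obtain zs where "subseq zs ys" "list_all2 P xs zs" by blast
  then show ?case using list_emb_Cons2 by (intro exI[of _ "y#zs"]) auto
qed

lemma list_all2_emb: "list_all2 P xs ys \<Longrightarrow> list_emb P xs ys"
  by (induction rule: list_all2_induct) auto

primrec iter_list :: "('b list \<Rightarrow> 'b) \<Rightarrow> nat \<Rightarrow> 'b list" where
  "iter_list c 0 = []"
| "iter_list c (Suc n) = iter_list c n @ [c (iter_list c n)]"

lemma length_iter_list[simp]: "length (iter_list c n) = n"
  by (induction n) auto

lemma nth_iter_list: "i < n \<Longrightarrow> iter_list c n ! i = c (iter_list c i)"
  by (induction n) (auto simp: nth_append less_Suc_eq)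

lemma set_iter_list: "set (iter_list c n) = (\<lambda>i. c (iter_list c i)) ` {..<n}"
  by (induction n) (auto simp: lessThan_Suc)

definition bad :: "'x set \<Rightarrow> ('x \<Rightarrow> 'x \<Rightarrow> bool) \<Rightarrow> (nat \<Rightarrow> 'x) \<Rightarrow> bool" where
  "bad Z R f \<longleftrightarrow> (\<forall>i. f i \<in> Z) \<and> (\<forall>i j. i < j \<longrightarrow> \<not> R (f i) (f j))"

definition af :: "'x set \<Rightarrow> ('x \<Rightarrow> 'x \<Rightarrow> bool) \<Rightarrow> bool" where
  "af Z R \<longleftrightarrow> \<not> (\<exists>f. bad Z R f)"

lemma af_homogeneous:
  assumes af: "af Z R" and h: "\<And>i. h i \<in> Z"
  shows "\<exists>\<phi>::nat\<Rightarrow>nat. strict_mono \<phi> \<and> (\<forall>k l. k < l \<longrightarrow> R (h (\<phi> k)) (h (\<phi> l)))"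
proof -
  define col where "col X = (if R (h (Min X)) (h (Max X)) then 0 else 1::nat)" for X :: "nat set"
  have col2: "col X < 2" for X by (simp add: col_def)
  have "\<exists>Y t. Y \<subseteq> UNIV \<and> infinite Y \<and> t < 2
            \<and> (\<forall>X. X \<subseteq> Y \<and> finite X \<and> card X = 2 \<longrightarrow> col X = t)"
    using Ramsey[where Z="UNIV::nat set" and r=2 and s=2 and f=col] col2 by blast
  then obtain Y t where Y: "infinite Y" "t < 2"
    and hom0: "\<forall>X. X \<subseteq> Y \<and> finite X \<and> card X = 2 \<longrightarrow> col X = t" by (elim exE conjE) (rule that)
  have hom: "col X = t" if "X \<subseteq> Y" "finite X" "card X = 2" for X using hom0 that by simp
  define \<phi> where "\<phi> = enumerate Y"
  have sm: "strict_mono \<phi>" using Y by (simp add: \<phi>_def strict_mono_enumerate)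
  have inY: "\<phi> k \<in> Y" for k using Y by (simp add: \<phi>_def enumerate_in_set)
  have colv: "(if R (h (\<phi> k)) (h (\<phi> l)) then 0 else 1) = t" if "k < l" for k l
  proof -
    have lt: "\<phi> k < \<phi> l" using sm that by (simp add: strict_mono_less)
    then have "card {\<phi> k, \<phi> l} = 2" by simp
    then have "col {\<phi> k, \<phi> l} = t" using inY by (intro hom) auto
    moreover have "Min {\<phi> k, \<phi> l} = \<phi> k" "Max {\<phi> k, \<phi> l} = \<phi> l" using lt by auto
    ultimately show ?thesis by (simp add: col_def)
  qed
  show ?thesis
  proof (cases "t = 0")
    case True
    have "R (h (\<phi> k)) (h (\<phi> l))" if "k < l" for k l
      using colv[OF that] True by (cases "R (h (\<phi> k)) (h (\<phi> l))") auto
    then show ?thesis using sm by blast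
  next
    case False
    have "\<not> R (h (\<phi> k)) (h (\<phi> l))" if "k < l" for k l
      using colv[OF that] False by (cases "R (h (\<phi> k)) (h (\<phi> l))") auto
    then have "bad Z R (h \<circ> \<phi>)" unfolding bad_def using h by auto
    then show ?thesis using af by (auto simp: af_def)
  qed
qed

theorem higman:
  assumes af: "af Z R"
  shows "af (lists Z) (list_emb R)"
proof (rule ccontr)
  let ?A = "lists Z" and ?E = "list_emb R"
  assume "\<not> af ?A ?E"
  then obtain g where g: "bad ?A ?E g" by (auto simp: af_def)
  define extp where "extp ps \<longleftrightarrow> (\<exists>f. bad ?A ?E f \<and> (\<forall>i<length ps. f i = ps ! i))" for ps
  define chs where "chs ps = (SOME x. extp (ps @ [x]) \<and> (\<forall>y. extp (ps @ [y]) \<longrightarrow> length x \<le> length y))" for ps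
  have chs: "extp (ps @ [chs ps]) \<and> (\<forall>y. extp (ps @ [y]) \<longrightarrow> length (chs ps) \<le> length y)"
    if "extp ps" for ps
  proof -
    from that obtain f where f: "bad ?A ?E f" "\<forall>i<length ps. f i = ps ! i" by (auto simp: extp_def)
    have "extp (ps @ [f (length ps)])" unfolding extp_def
      using f by (intro exI[of _ f]) (auto simp: nth_append less_Suc_eq)
    then have "\<exists>x. extp (ps @ [x]) \<and> (\<forall>y. extp (ps @ [y]) \<longrightarrow> length x \<le> length y)"
      by (rule ex_has_least_nat)
    then show ?thesis unfolding chs_def by (rule someI_ex)
  qed
  define pre where "pre = iter_list chs"
  have ext_pre: "extp (pre n)" for n
  proof (induction n)
    case 0 show ?case using g by (auto simp: pre_def extp_def)
  next
    case (Suc n) then show ?case using chs by (simp add: pre_def)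
  qed
  define m where "m i = chs (pre i)" for i
  have pre_nth: "i < n \<Longrightarrow> pre n ! i = m i" for i n by (simp add: pre_def m_def nth_iter_list)
  have m_bad: "bad ?A ?E m"
  proof -
    have "m i \<in> ?A \<and> (\<forall>j<i. \<not> ?E (m j) (m i))" for i
    proof -
      obtain f where f: "bad ?A ?E f" "\<forall>k<length (pre (Suc i)). f k = pre (Suc i) ! k"
        using ext_pre[of "Suc i"] by (auto simp: extp_def)
      then have "f k = m k" if "k \<le> i" for k using that pre_nth[of k "Suc i"] by (simp add: pre_def)
      then show ?thesis using f(1) unfolding bad_def by (metis less_imp_le order_refl)
    qed
    then show ?thesis unfolding bad_def by blast
  qed
  have m_min: "length (m n) \<le> length (f n)" if "bad ?A ?E f" "\<And>i. i < n \<Longrightarrow> f i = m i" for f n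
  proof -
    have "extp (pre n @ [f n])" unfolding extp_def
      using that pre_nth by (intro exI[of _ f]) (auto simp: nth_append less_Suc_eq pre_def)
    then show ?thesis using chs[OF ext_pre[of n]] by (simp add: m_def)
  qed
  have mne: "m i \<noteq> []" for i
  proof
    assume "m i = []"
    then have "?E (m i) (m (Suc i))" by simp
    then show False using m_bad by (auto simp: bad_def)
  qed
  define h where "h i = hd (m i)" for i
  define t where "t i = tl (m i)" for i
  have mht: "m i = h i # t i" for i using mne[of i] by (simp add: h_def t_def)
  have hZ: "h i \<in> Z" and tA: "t i \<in> ?A" for i using m_bad mht[of i] unfolding bad_def
    by (metis Cons_in_lists_iff)+
  from af_homogeneous[of Z R h, OF af hZ] obtain \<phi> :: "nat \<Rightarrow> nat" where sm: "strict_mono \<phi>"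
    and R0: "\<forall>k l. k < l \<longrightarrow> R (h (\<phi> k)) (h (\<phi> l))"
    by (elim exE conjE) (rule that)
  have R\<phi>: "R (h (\<phi> k)) (h (\<phi> l))" if "k < l" for k l using R0 that by simp
  define b where "b i = (if i < \<phi> 0 then m i else t (\<phi> (i - \<phi> 0)))" for i
  have "\<not> bad ?A ?E b"
  proof
    assume bb: "bad ?A ?E b"
    have "length (m (\<phi> 0)) \<le> length (b (\<phi> 0))" by (rule m_min[OF bb]) (simp add: b_def)
    moreover have "length (b (\<phi> 0)) < length (m (\<phi> 0))" by (simp add: b_def mht)
    ultimately show False by simp
  qed
  moreover have "b i \<in> ?A" for i using m_bad tA by (auto simp: b_def bad_def)
  ultimately obtain i j where ij: "i < j" "?E (b i) (b j)" unfolding bad_def by blast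
  have \<phi>ge: "\<phi> 0 \<le> \<phi> k" for k using sm by (simp add: strict_mono_less_eq)
  show False
  proof (cases "j < \<phi> 0")
    case True
    then show ?thesis using ij m_bad by (auto simp: b_def bad_def)
  next
    case jge: False
    show ?thesis
    proof (cases "i < \<phi> 0")
      case True
      then have "?E (m i) (t (\<phi> (j - \<phi> 0)))" using ij jge by (simp add: b_def)
      then have "?E (m i) (m (\<phi> (j - \<phi> 0)))" by (simp only: mht[of "\<phi> (j - \<phi> 0)"]) (rule list_emb_Cons)
      moreover have "i < \<phi> (j - \<phi> 0)" using True \<phi>ge[of "j - \<phi> 0"] by simp
      ultimately show ?thesis using m_bad by (auto simp: bad_def)
    next
      case False
      then have "?E (t (\<phi> (i - \<phi> 0))) (t (\<phi> (j - \<phi> 0)))" using ij jge by (simp add: b_def)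
      moreover have "i - \<phi> 0 < j - \<phi> 0" using ij False by simp
      ultimately have "?E (m (\<phi> (i - \<phi> 0))) (m (\<phi> (j - \<phi> 0)))" using R\<phi> by (simp add: mht)
      moreover have "\<phi> (i - \<phi> 0) < \<phi> (j - \<phi> 0)" using \<open>i - \<phi> 0 < j - \<phi> 0\<close> sm
        by (simp add: strict_mono_less)
      ultimately show ?thesis using m_bad by (auto simp: bad_def)
    qed
  qed
qed



section \<open>Trees\<close>

fun froot :: "'a ftree \<Rightarrow> 'a" where "froot (Node a ts) = a"
fun fkids :: "'a ftree \<Rightarrow> 'a ftree list" where "fkids (Node a ts) = ts"

lemma node_set_alt: "node_set U V = {t. froot t \<in> U \<and> fkids t \<in> V}"
  unfolding node_set_def by (auto, metis fkids.simps froot.simps ftree.exhaust)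

lemma Node_in_node_set[simp]: "Node a ts \<in> node_set U V \<longleftrightarrow> a \<in> U \<and> ts \<in> V"
  by (simp add: node_set_alt)

lemma node_set_Int: "node_set U V = node_set U UNIV \<inter> node_set UNIV V"
  by (auto simp: node_set_alt)

lemma node_set_UNIV: "node_set UNIV UNIV = UNIV"
  by (auto simp: node_set_alt)

lemma subtrees_self: "t \<in> subtrees t"
  by (cases t) auto

lemma subtrees_trans: "s \<in> subtrees t \<Longrightarrow> t \<in> subtrees u \<Longrightarrow> s \<in> subtrees u"
proof (induction u arbitrary: t)
  case (Node a us)
  then show ?case by auto
qed

lemma tree_emb_refl:
  assumes "\<And>x. le x x" shows "tree_emb le t t"
proof (induction t)
  case (Node a ts)
  then show ?case by (auto intro!: tree_emb.root assms list_emb_refl)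
qed

lemma tree_emb_subtree:
  assumes "\<And>x. le x x" shows "s \<in> subtrees t \<Longrightarrow> tree_emb le s t"
proof (induction t)
  case (Node a ts)
  then show ?case using tree_emb_refl[of le, OF assms] by (auto intro: tree_emb.sub)
qed

lemma tree_emb_child:
  assumes "\<And>x. le x x" "t \<in> set ts" shows "tree_emb le t (Node a ts)"
  by (rule tree_emb.sub[OF assms(2) tree_emb_refl[of le, OF assms(1)]])

lemma tree_emb_trans:
  assumes trans: "\<And>x y z. le x y \<Longrightarrow> le y z \<Longrightarrow> le x z"
  shows "tree_emb le t u \<Longrightarrow> tree_emb le s t \<Longrightarrow> tree_emb le s u"
proof (induction t u arbitrary: s rule: tree_emb.induct)
  case (sub t' us t a)
  then show ?case by (blast intro: tree_emb.sub)
next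
  case (root b a ts us)
  from root.prems consider (sb) t' where "t' \<in> set ts" "tree_emb le s t'"
    | (rt) c ss where "s = Node c ss" "le c b" "list_emb (tree_emb le) ss ts"
    by (cases rule: tree_emb.cases) auto
  then show ?case
  proof cases
    case sb
    from root.IH sb(1) obtain u' where "u' \<in> set us"
      "tree_emb le t' u' \<and> (\<forall>s. tree_emb le s t' \<longrightarrow> tree_emb le s u')"
      by (auto elim: list_emb_set)
    then show ?thesis using sb(2) by (auto intro: tree_emb.sub)
  next
    case rt
    have "list_emb (tree_emb le) ss us" by (rule list_emb_comp[OF root.IH rt(3)]) blast
    then show ?thesis using rt trans root.hyps by (auto intro: tree_emb.root)
  qed
qed

section \<open>Upward closure\<close>

definition upcl :: "('b \<Rightarrow> 'b \<Rightarrow> bool) \<Rightarrow> 'b set \<Rightarrow> bool" where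
  "upcl r S \<longleftrightarrow> (\<forall>x y. x \<in> S \<longrightarrow> r x y \<longrightarrow> y \<in> S)"

lemma gen_top_upcl:
  assumes "openin (gen_top S) U" "\<And>X. X \<in> S \<Longrightarrow> upcl r X"
  shows "upcl r U"
  by (rule gen_top_induct[OF assms(1)]) (use assms(2) in \<open>auto simp: upcl_def\<close>)

lemma upclosure_upcl:
  assumes "\<And>x y z. r x y \<Longrightarrow> r y z \<Longrightarrow> r x z"
  shows "upcl r (upclosure r A)"
  using assms unfolding upcl_def upclosure_def by blast

lemma pattern_upcl:
  assumes "\<And>U. U \<in> set Us \<Longrightarrow> upcl le U"
  shows "upcl (list_emb le) (word_pattern Us)"
  unfolding upcl_def
proof (intro allI impI)
  fix w w' assume "w \<in> word_pattern Us" "list_emb le w w'"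
  then obtain xs where xs: "subseq xs w" "list_all2 (\<in>) xs Us" by (auto simp: word_pattern_def)
  have "list_emb le xs w'" by (rule list_emb_comp[OF \<open>list_emb le w w'\<close> xs(1)]) simp
  then obtain zs where zs: "subseq zs w'" "list_all2 le xs zs" using list_emb_split by blast
  have "list_all2 (\<in>) zs Us"
    using xs(2) zs(2) assms unfolding list_all2_conv_all_nth upcl_def
    by (metis nth_mem)
  then show "w' \<in> word_pattern Us" using zs(1) by (auto simp: word_pattern_def)
qed

lemma subword_upcl:
  assumes "\<And>U. openin \<tau> U \<Longrightarrow> upcl le U" "openin (subword_topology \<tau>) V"
  shows "upcl (list_emb le) V"
  using assms(2) unfolding subword_topology_def
  by (rule gen_top_upcl) (use assms(1) pattern_upcl in blast)

abbreviation LE :: "'a topology \<Rightarrow> 'a ftree \<Rightarrow> 'a ftree \<Rightarrow> bool" where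
  "LE \<theta> \<equiv> tree_emb (spec_le \<theta>)"

lemma spec_refl: "spec_le \<theta> x x" by (simp add: spec_le_def)
lemma spec_trans: "spec_le \<theta> x y \<Longrightarrow> spec_le \<theta> y z \<Longrightarrow> spec_le \<theta> x z" by (simp add: spec_le_def)

lemma LE_refl: "LE \<theta> t t" by (rule tree_emb_refl) (rule spec_refl)
lemma LE_trans:
  assumes "LE \<theta> s t" "LE \<theta> t u" shows "LE \<theta> s u"
proof -
  have tr: "\<And>x y z. spec_le \<theta> x y \<Longrightarrow> spec_le \<theta> y z \<Longrightarrow> spec_le \<theta> x z" by (rule spec_trans)
  show ?thesis by (rule tree_emb_trans[OF tr assms(2) assms(1)])
qed
lemma LE_subtree: "s \<in> subtrees t \<Longrightarrow> LE \<theta> s t" by (rule tree_emb_subtree) (rule spec_refl)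
lemma LE_child: "t \<in> set ts \<Longrightarrow> LE \<theta> t (Node a ts)" by (rule tree_emb_child) (auto intro: spec_refl)

lemma open_spec_upcl: "openin \<theta> U \<Longrightarrow> upcl (spec_le \<theta>) U"
  by (auto simp: upcl_def spec_le_def)

lemma emb_diamond:
  assumes U: "upcl (spec_le \<theta>) U" and V: "upcl (list_emb (LE \<theta>)) V"
  shows "LE \<theta> s t \<Longrightarrow> s \<in> node_set U V \<Longrightarrow> t \<in> diamond (node_set U V)"
proof (induction s t rule: tree_emb.induct)
  case (sub t ts s a)
  then show ?case using subtrees_trans[of _ t "Node a ts"] subtrees_self[of t]
    by (auto simp: diamond_def)
next
  case (root b a ss ts)
  have "list_emb (LE \<theta>) ss ts" using root.IH by (induction rule: list_emb.induct) auto
  then have "Node a ts \<in> node_set U V" using root U V by (auto simp: upcl_def)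
  then show ?case using subtrees_self by (auto simp: diamond_def)
qed

lemma diamond_eq_upclosure:
  assumes U: "upcl (spec_le \<theta>) U" and V: "upcl (list_emb (LE \<theta>)) V"
  shows "upclosure (LE \<theta>) (node_set U V) = diamond (node_set U V)"
proof
  show "upclosure (LE \<theta>) (node_set U V) \<subseteq> diamond (node_set U V)"
    using emb_diamond[OF U V] by (auto simp: upclosure_def)
  show "diamond (node_set U V) \<subseteq> upclosure (LE \<theta>) (node_set U V)"
    by (auto simp: upclosure_def diamond_def intro: LE_subtree)
qed



section \<open>Tree topology\<close>

lemma subword_mono: "coarser \<tau>1 \<tau>2 \<Longrightarrow> coarser (subword_topology \<tau>1) (subword_topology \<tau>2)"
  unfolding subword_topology_def by (rule gen_top_mono) (auto simp: coarser_def)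

lemma subword_UNIV: "openin (subword_topology \<tau>) UNIV"
  unfolding subword_topology_def by (rule gen_top_UNIV)

lemma openin_UNIV_top: "top_on_univ \<tau> \<Longrightarrow> openin \<tau> UNIV"
  by (metis openin_topspace top_on_univ_def)

definition TT :: "'a topology \<Rightarrow> 'a ftree topology" where
  "TT \<theta> = topology (\<lambda>S. \<forall>\<tau>. top_on_univ \<tau> \<and> tree_top_prop \<theta> \<tau> \<longrightarrow> openin \<tau> S)"

lemma openin_TT: "openin (TT \<theta>) S \<longleftrightarrow> (\<forall>\<tau>. top_on_univ \<tau> \<and> tree_top_prop \<theta> \<tau> \<longrightarrow> openin \<tau> S)"
proof -
  have "istopology (\<lambda>S. \<forall>\<tau>. top_on_univ \<tau> \<and> tree_top_prop \<theta> \<tau> \<longrightarrow> openin \<tau> S)"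
    unfolding istopology_def by (auto intro: openin_Int openin_Union)
  then show ?thesis unfolding TT_def by simp
qed

lemma top_on_univ_TT: "top_on_univ (TT \<theta>)"
proof -
  have "openin (TT \<theta>) UNIV" by (simp add: openin_TT openin_UNIV_top)
  then show ?thesis unfolding top_on_univ_def using openin_subset by blast
qed

lemma TT_least: "top_on_univ \<tau> \<Longrightarrow> tree_top_prop \<theta> \<tau> \<Longrightarrow> coarser (TT \<theta>) \<tau>"
  by (simp add: coarser_def openin_TT)

lemma TT_prop: "tree_top_prop \<theta> (TT \<theta>)"
  unfolding tree_top_prop_def
proof (intro allI impI)
  fix U V assume U: "openin \<theta> U" and V: "openin (subword_topology (TT \<theta>)) V"
  show "openin (TT \<theta>) (diamond (node_set U V))"
    unfolding openin_TT
  proof (intro allI impI)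
    fix \<tau> assume \<tau>: "top_on_univ \<tau> \<and> tree_top_prop \<theta> \<tau>"
    then have "coarser (TT \<theta>) \<tau>" by (simp add: TT_least)
    then have "openin (subword_topology \<tau>) V" using V subword_mono by (auto simp: coarser_def)
    then show "openin \<tau> (diamond (node_set U V))" using \<tau> U by (auto simp: tree_top_prop_def)
  qed
qed

lemma is_TT: "is_tree_topology \<theta> (TT \<theta>)"
  unfolding is_tree_topology_def using top_on_univ_TT TT_prop TT_least by blast

lemma tree_topology_eq: "tree_topology \<theta> = TT \<theta>"
  unfolding tree_topology_def
proof (rule the_equality)
  show "is_tree_topology \<theta> (TT \<theta>)" by (rule is_TT)
  fix \<tau> assume "is_tree_topology \<theta> \<tau>"
  then show "\<tau> = TT \<theta>" using is_TT unfolding is_tree_topology_def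
    by (metis coarser_antisym)
qed

lemma TT_upcl: "openin (TT \<theta>) S \<Longrightarrow> upcl (LE \<theta>) S"
proof -
  define P where "P S \<longleftrightarrow> openin (TT \<theta>) S \<and> upcl (LE \<theta>) S" for S
  have istop: "istopology P" unfolding istopology_def P_def
    by (auto intro: openin_Int openin_Union simp: upcl_def)
  define \<tau> where "\<tau> = topology P"
  have op: "openin \<tau> S \<longleftrightarrow> openin (TT \<theta>) S \<and> upcl (LE \<theta>) S" for S
    using istop by (simp add: \<tau>_def P_def)
  have top: "top_on_univ \<tau>"
  proof -
    have "openin \<tau> UNIV" using openin_UNIV_top[OF top_on_univ_TT[of \<theta>]] by (simp add: op upcl_def)
    then show ?thesis unfolding top_on_univ_def using openin_subset by blast
  qed
  have c1: "coarser \<tau> (TT \<theta>)" by (simp add: coarser_def op)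
  have "tree_top_prop \<theta> \<tau>"
    unfolding tree_top_prop_def
  proof (intro allI impI)
    fix U V assume U: "openin \<theta> U" and V: "openin (subword_topology \<tau>) V"
    have V2: "openin (subword_topology (TT \<theta>)) V" using V subword_mono[OF c1] by (simp add: coarser_def)
    have Vu: "upcl (list_emb (LE \<theta>)) V" by (rule subword_upcl[OF _ V]) (simp add: op)
    have eq: "upclosure (LE \<theta>) (node_set U V) = diamond (node_set U V)"
      by (rule diamond_eq_upclosure[OF open_spec_upcl[OF U] Vu])
    have "upcl (LE \<theta>) (diamond (node_set U V))"
      unfolding eq[symmetric] by (rule upclosure_upcl) (rule LE_trans)
    moreover have "openin (TT \<theta>) (diamond (node_set U V))"
      using TT_prop U V2 by (auto simp: tree_top_prop_def)
    ultimately show "openin \<tau> (diamond (node_set U V))" by (simp add: op)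
  qed
  then have "coarser (TT \<theta>) \<tau>" using top by (rule TT_least[rotated])
  then show "openin (TT \<theta>) S \<Longrightarrow> upcl (LE \<theta>) S" by (simp add: coarser_def op)
qed

lemma K_upcl: "openin (K_map \<theta> \<tau>) S \<Longrightarrow> upcl (LE \<theta>) S"
  unfolding K_map_def by (rule gen_top_upcl) (auto intro: upclosure_upcl LE_trans)

lemma K_TT: "K_map \<theta> (TT \<theta>) = TT \<theta>"
proof -
  define D where "D = {diamond (node_set U V) | U V. openin \<theta> U \<and> openin (subword_topology (TT \<theta>)) V}"
  have "{upclosure (LE \<theta>) (node_set U V) | U V. openin \<theta> U \<and> openin (subword_topology (TT \<theta>)) V} = D"
  proof -
    have "upclosure (LE \<theta>) (node_set U V) = diamond (node_set U V)"
      if "openin \<theta> U" "openin (subword_topology (TT \<theta>)) V" for U V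
      by (rule diamond_eq_upclosure[OF open_spec_upcl[OF that(1)] subword_upcl[OF TT_upcl that(2)]])
    then show ?thesis unfolding D_def by blast
  qed
  then have K: "K_map \<theta> (TT \<theta>) = gen_top D" by (simp add: K_map_def)
  have c1: "coarser (gen_top D) (TT \<theta>)"
    by (rule gen_top_minimal[OF top_on_univ_TT]) (use TT_prop in \<open>auto simp: D_def tree_top_prop_def\<close>)
  have "tree_top_prop \<theta> (gen_top D)"
    unfolding tree_top_prop_def
  proof (intro allI impI)
    fix U V assume U: "openin \<theta> U" and V: "openin (subword_topology (gen_top D)) V"
    have "openin (subword_topology (TT \<theta>)) V" using V subword_mono[OF c1] by (simp add: coarser_def)
    then show "openin (gen_top D) (diamond (node_set U V))"
      using U by (intro gen_top_basis) (auto simp: D_def)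
  qed
  then have "coarser (TT \<theta>) (gen_top D)" by (intro TT_least) simp
  then show ?thesis using c1 K by (simp add: coarser_antisym)
qed

lemma K_fix_least:
  assumes top: "top_on_univ \<tau>" and fx: "K_map \<theta> \<tau> = \<tau>"
  shows "coarser (TT \<theta>) \<tau>"
proof (rule TT_least[OF top])
  have up: "upcl (LE \<theta>) S" if "openin \<tau> S" for S
    using that fx K_upcl by metis
  show "tree_top_prop \<theta> \<tau>"
    unfolding tree_top_prop_def
  proof (intro allI impI)
    fix U V assume U: "openin \<theta> U" and V: "openin (subword_topology \<tau>) V"
    have eq: "upclosure (LE \<theta>) (node_set U V) = diamond (node_set U V)"
      by (rule diamond_eq_upclosure[OF open_spec_upcl[OF U] subword_upcl[OF up V]])
    have "openin (K_map \<theta> \<tau>) (upclosure (LE \<theta>) (node_set U V))"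
      unfolding K_map_def using U V by (intro gen_top_basis) blast
    then show "openin \<tau> (diamond (node_set U V))" using fx eq by simp
  qed
qed

lemma K_mono: "coarser \<tau>1 \<tau>2 \<Longrightarrow> coarser (K_map \<theta> \<tau>1) (K_map \<theta> \<tau>2)"
  unfolding K_map_def
proof (rule gen_top_mono)
  assume c: "coarser \<tau>1 \<tau>2"
  have "openin (subword_topology \<tau>2) V" if "openin (subword_topology \<tau>1) V" for V
    using subword_mono[OF c] that by (simp add: coarser_def)
  then show "{upclosure (LE \<theta>) (node_set U V) |U V. openin \<theta> U \<and> openin (subword_topology \<tau>1) V}
    \<subseteq> {upclosure (LE \<theta>) (node_set U V) |U V. openin \<theta> U \<and> openin (subword_topology \<tau>2) V}"
    by blast
qed



section \<open>Noetherianity\<close>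

definition Z0 :: "'b topology \<Rightarrow> ('b \<times> 'b set) set" where
  "Z0 \<tau> = {(x, A). openin \<tau> A \<and> x \<in> A}"

definition Rp :: "'b \<times> 'b set \<Rightarrow> 'b \<times> 'b set \<Rightarrow> bool" where
  "Rp p q \<longleftrightarrow> fst q \<in> snd p"

lemma af_Z0:
  assumes noe: "noetherian \<tau>"
  shows "af (Z0 \<tau>) Rp"
  unfolding af_def
proof
  assume "\<exists>f. bad (Z0 \<tau>) Rp f"
  then obtain f where bd: "bad (Z0 \<tau>) Rp f" by blast
  define A where "A i = snd (f i)" for i
  define x where "x i = fst (f i)" for i
  have fi: "f i \<in> Z0 \<tau>" for i using bd by (simp add: bad_def)
  have oA: "openin \<tau> (A i)" and xA: "x i \<in> A i" for i
    using fi[of i] by (cases "f i"; auto simp: Z0_def A_def x_def)+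
  have nR: "x j \<notin> A i" if "i < j" for i j
    using bd that unfolding bad_def Rp_def A_def x_def by auto
  obtain F' where F': "F' \<subseteq> range A" "finite F'" "\<Union>F' = \<Union>(range A)"
    using noeth_fup[OF noe, of "range A"] oA unfolding fup_def by blast
  then obtain I where I: "finite I" "F' = A ` I" by (meson finite_subset_image subset_UNIV)
  then obtain N where N: "I \<subseteq> {..<N}" using finite_nat_bounded by blast
  have "x N \<in> \<Union>F'" using F'(3) xA[of N] by auto
  then obtain i where "i \<in> I" "x N \<in> A i" using I by auto
  then show False using N nR[of i N] by auto
qed

lemma seq_fup:
  fixes F :: "'b set set"
  assumes H: "\<And>(P :: nat \<Rightarrow> 'b set) (w :: nat \<Rightarrow> 'b). (\<And>j. P j \<in> F) \<Longrightarrow> (\<And>j. w j \<in> P j) \<Longrightarrow> \<exists>i j. i < j \<and> w j \<in> P i"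
  shows "fup F"
proof (rule ccontr)
  assume nf: "\<not> fup F"
  have ex: "\<exists>p. fst p \<in> F \<and> snd p \<in> fst p \<and> snd p \<notin> \<Union>(fst ` set ps)"
    if "fst ` set ps \<subseteq> F" for ps :: "('b set \<times> 'b) list"
  proof -
    have "finite (fst ` set ps)" by simp
    then have "\<Union>(fst ` set ps) \<noteq> \<Union>F" using nf that unfolding fup_def by blast
    moreover have "\<Union>(fst ` set ps) \<subseteq> \<Union>F" using that by auto
    ultimately obtain X w where "X \<in> F" "w \<in> X" "w \<notin> \<Union>(fst ` set ps)" by blast
    then show ?thesis by (intro exI[of _ "(X, w)"]) auto
  qed
  define c where "c ps = (SOME p. fst p \<in> F \<and> snd p \<in> fst p \<and> snd p \<notin> \<Union>(fst ` set ps))" for ps :: "('b set \<times> 'b) list"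
  define seq where "seq i = c (iter_list c i)" for i
  have *: "fst (seq n) \<in> F \<and> snd (seq n) \<in> fst (seq n) \<and> (\<forall>i<n. snd (seq n) \<notin> fst (seq i))" for n
  proof (induction n rule: less_induct)
    case (less n)
    have st: "set (iter_list c n) = seq ` {..<n}" by (simp add: seq_def set_iter_list)
    then have "fst ` set (iter_list c n) \<subseteq> F" using less by auto
    then have "fst (c (iter_list c n)) \<in> F \<and> snd (c (iter_list c n)) \<in> fst (c (iter_list c n))
       \<and> snd (c (iter_list c n)) \<notin> \<Union>(fst ` set (iter_list c n))"
      unfolding c_def by (rule someI_ex[OF ex])
    then show ?case using st by (auto simp: seq_def)
  qed
  then obtain i j where "i < j" "snd (seq j) \<in> fst (seq i)"
    using H[of "\<lambda>j. fst (seq j)" "\<lambda>j. snd (seq j)"] by blast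
  with * show False by blast
qed

lemma pattern_fup:
  assumes noe: "noetherian \<tau>" and F: "F \<subseteq> {word_pattern Us | Us. \<forall>U\<in>set Us. openin \<tau> U}"
  shows "fup F"
proof (rule seq_fup)
  fix P :: "nat \<Rightarrow> 'a list set" and w assume P: "\<And>j. P j \<in> F" and w: "\<And>j. w j \<in> P j"
  have "\<exists>Us. P j = word_pattern Us \<and> (\<forall>U\<in>set Us. openin \<tau> U)" for j using P[of j] F by blast
  then obtain Us where Us: "\<And>j. P j = word_pattern (Us j)" "\<And>j. \<forall>U\<in>set (Us j). openin \<tau> U" by metis
  have "\<exists>xs. subseq xs (w j) \<and> list_all2 (\<in>) xs (Us j)" for j
    using w[of j] Us(1)[of j] by (auto simp: word_pattern_def)
  then obtain xs where xs: "\<And>j. subseq (xs j) (w j)" "\<And>j. list_all2 (\<in>) (xs j) (Us j)" by metis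
  have len: "length (xs k) = length (Us k)" for k using xs(2) list_all2_lengthD by blast
  define z where "z j = zip (xs j) (Us j)" for j
  have zZ: "z j \<in> lists (Z0 \<tau>)" for j
  proof -
    have "\<forall>k<length (xs j). xs j ! k \<in> Us j ! k" using xs(2)[of j] by (simp add: list_all2_conv_all_nth)
    moreover have "\<forall>k<length (Us j). openin \<tau> (Us j ! k)" using Us(2)[of j] by simp
    ultimately show ?thesis using len[of j]
      by (auto simp: z_def Z0_def set_zip)
  qed
  have "af (lists (Z0 \<tau>)) (list_emb Rp)" by (rule higman[OF af_Z0[OF noe]])
  then obtain i j :: nat where ij: "i < j" "list_emb Rp (z i) (z j)" using zZ unfolding af_def bad_def by blast
  then obtain zs where zs: "subseq zs (z j)" "list_all2 Rp (z i) zs" using list_emb_split by blast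
  have "subseq (map fst zs) (map fst (z j))" by (rule subseq_map[OF zs(1)])
  moreover have "map fst (z j) = xs j" using len[of j] by (simp add: z_def)
  ultimately have "subseq (map fst zs) (xs j)" by simp
  then have s1: "subseq (map fst zs) (w j)" by (rule list_emb_comp[OF xs(1)]) simp
  have "list_all2 (\<in>) (map fst zs) (Us i)"
    using zs(2) len[of i] unfolding list_all2_conv_all_nth z_def Rp_def by auto
  then have "w j \<in> word_pattern (Us i)" using s1 by (auto simp: word_pattern_def)
  then show "\<exists>i j. i < j \<and> w j \<in> P i" using ij Us(1) by blast
qed

lemma noeth_subword: "noetherian \<tau> \<Longrightarrow> noetherian (subword_topology \<tau>)"
  unfolding subword_topology_def by (rule noeth_gen) (rule pattern_fup)

lemma fup_image:
  assumes noe: "noetherian \<sigma>" and F: "\<And>X. X \<in> F \<Longrightarrow> \<exists>A. openin \<sigma> A \<and> X = {t. \<exists>s\<in>A. r s t}"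
  shows "fup F"
proof -
  obtain g where g: "\<And>X. X \<in> F \<Longrightarrow> openin \<sigma> (g X) \<and> X = {t. \<exists>s\<in>g X. r s t}" using F by metis
  have "fup (g ` F)" using g by (intro noeth_fup[OF noe]) auto
  then obtain G' where G': "G' \<subseteq> g ` F" "finite G'" "\<Union>G' = \<Union>(g ` F)" unfolding fup_def by blast
  then obtain F' where F': "F' \<subseteq> F" "finite F'" "G' = g ` F'" by (meson finite_subset_image)
  have "\<Union>F' = \<Union>F"
  proof
    show "\<Union>F' \<subseteq> \<Union>F" using F' by auto
    show "\<Union>F \<subseteq> \<Union>F'"
    proof
      fix t assume "t \<in> \<Union>F"
      then obtain X where X: "X \<in> F" "t \<in> X" by blast
      then obtain s where s: "s \<in> g X" "r s t" using g by blast
      then have "s \<in> \<Union>G'" using G'(3) X by blast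
      then obtain Y where Y: "Y \<in> F'" "s \<in> g Y" using F' by auto
      then have "t \<in> Y" using g F' s by blast
      then show "t \<in> \<Union>F'" using Y by blast
    qed
  qed
  then show ?thesis using F' unfolding fup_def by blast
qed

lemma fup_Un: "fup A \<Longrightarrow> fup B \<Longrightarrow> fup (A \<union> B)"
  unfolding fup_def by (metis Union_Un_distrib Un_mono finite_UnI)

definition rho :: "'a topology \<Rightarrow> 'a ftree topology \<Rightarrow> 'a ftree topology" where
  "rho \<theta> \<tau> = gen_top ({node_set U UNIV | U. openin \<theta> U} \<union> {node_set UNIV V | V. openin (subword_topology \<tau>) V})"

lemma noeth_rho:
  assumes n1: "noetherian \<theta>" and n2: "noetherian \<tau>"
  shows "noetherian (rho \<theta> \<tau>)"
  unfolding rho_def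
proof (rule noeth_gen)
  fix C assume C: "C \<subseteq> {node_set U UNIV | U. openin \<theta> U} \<union> {node_set UNIV V | V. openin (subword_topology \<tau>) V}"
  have "fup (C \<inter> {node_set U UNIV | U. openin \<theta> U})"
  proof (rule fup_image[OF n1, where r = "\<lambda>s t. s = froot t"])
    fix X assume "X \<in> C \<inter> {node_set U UNIV | U. openin \<theta> U}"
    then show "\<exists>A. openin \<theta> A \<and> X = {t. \<exists>s\<in>A. s = froot t}" by (auto simp: node_set_alt)
  qed
  moreover have "fup (C \<inter> {node_set UNIV V | V. openin (subword_topology \<tau>) V})"
  proof (rule fup_image[OF noeth_subword[OF n2], where r = "\<lambda>s t. s = fkids t"])
    fix X assume "X \<in> C \<inter> {node_set UNIV V | V. openin (subword_topology \<tau>) V}"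
    then show "\<exists>A. openin (subword_topology \<tau>) A \<and> X = {t. \<exists>s\<in>A. s = fkids t}" by (auto simp: node_set_alt)
  qed
  ultimately have "fup ((C \<inter> {node_set U UNIV | U. openin \<theta> U}) \<union>
      (C \<inter> {node_set UNIV V | V. openin (subword_topology \<tau>) V}))" by (rule fup_Un)
  moreover have "(C \<inter> {node_set U UNIV | U. openin \<theta> U}) \<union>
      (C \<inter> {node_set UNIV V | V. openin (subword_topology \<tau>) V}) = C" using C by blast
  ultimately show "fup C" by simp
qed

lemma node_set_rho:
  assumes "openin \<theta> U" "openin (subword_topology \<tau>) V"
  shows "openin (rho \<theta> \<tau>) (node_set U V)"
proof -
  have "openin (rho \<theta> \<tau>) (node_set U UNIV)" "openin (rho \<theta> \<tau>) (node_set UNIV V)"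
    unfolding rho_def using assms by (auto intro!: gen_top_basis)
  then show ?thesis by (subst node_set_Int) (rule openin_Int)
qed

lemma noeth_K:
  assumes n1: "noetherian \<theta>" and n2: "noetherian \<tau>"
  shows "noetherian (K_map \<theta> \<tau>)"
  unfolding K_map_def
proof (rule noeth_gen)
  fix C assume C: "C \<subseteq> {upclosure (LE \<theta>) (node_set U V) | U V. openin \<theta> U \<and> openin (subword_topology \<tau>) V}"
  show "fup C"
  proof (rule fup_image[OF noeth_rho[OF n1 n2], where r = "LE \<theta>"])
    fix X assume "X \<in> C"
    then obtain U V where "openin \<theta> U" "openin (subword_topology \<tau>) V" "X = upclosure (LE \<theta>) (node_set U V)"
      using C by blast
    then show "\<exists>A. openin (rho \<theta> \<tau>) A \<and> X = {t. \<exists>s\<in>A. LE \<theta> s t}"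
      by (intro exI[of _ "node_set U V"]) (auto simp: upclosure_def node_set_rho)
  qed
qed



section \<open>Expander\<close>

lemma restrict_gen:
  assumes "UNIV \<in> S"
  shows "restrict_top (gen_top S) H = gen_top {W \<inter> H | W. W \<in> S}"
  unfolding restrict_top_def
proof (rule coarser_antisym)
  show "coarser (gen_top {U \<inter> H |U. openin (gen_top S) U}) (gen_top {W \<inter> H |W. W \<in> S})"
  proof (rule gen_top_minimal[OF top_on_univ_gen_top])
    fix X assume "X \<in> {U \<inter> H |U. openin (gen_top S) U}"
    then obtain U where U: "openin (gen_top S) U" "X = U \<inter> H" by blast
    have "openin (gen_top {W \<inter> H |W. W \<in> S}) (U \<inter> H)"
    proof (rule gen_top_induct[OF U(1), where P = "\<lambda>U. openin (gen_top {W \<inter> H |W. W \<in> S}) (U \<inter> H)"])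
      show "openin (gen_top {W \<inter> H |W. W \<in> S}) (UNIV \<inter> H)"
        using assms by (intro gen_top_basis) blast
      show "openin (gen_top {W \<inter> H |W. W \<in> S}) ({} \<inter> H)" by simp
      show "openin (gen_top {W \<inter> H |W. W \<in> S}) (a \<inter> b \<inter> H)"
        if "openin (gen_top {W \<inter> H |W. W \<in> S}) (a \<inter> H)" "openin (gen_top {W \<inter> H |W. W \<in> S}) (b \<inter> H)" for a b
      proof -
        have "a \<inter> b \<inter> H = (a \<inter> H) \<inter> (b \<inter> H)" by blast
        then show ?thesis using that by (simp add: openin_Int)
      qed
      show "openin (gen_top {W \<inter> H |W. W \<in> S}) (\<Union>K \<inter> H)"
        if "\<And>k. k \<in> K \<Longrightarrow> openin (gen_top {W \<inter> H |W. W \<in> S}) (k \<inter> H)" for K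
      proof -
        have e: "\<Union>K \<inter> H = \<Union>((\<lambda>k. k \<inter> H) ` K)" by blast
        have "openin (gen_top {W \<inter> H |W. W \<in> S}) (\<Union>((\<lambda>k. k \<inter> H) ` K))"
          by (rule openin_Union) (use that in auto)
        then show ?thesis by (simp only: e)
      qed
      show "openin (gen_top {W \<inter> H |W. W \<in> S}) (U \<inter> H)" if "U \<in> S" for U
        using that by (intro gen_top_basis) blast
    qed
    then show "openin (gen_top {W \<inter> H |W. W \<in> S}) X" using U by simp
  qed
  show "coarser (gen_top {W \<inter> H |W. W \<in> S}) (gen_top {U \<inter> H |U. openin (gen_top S) U})"
    by (rule gen_top_mono) (auto intro: gen_top_basis)
qed

lemma restrict_open:
  assumes top: "top_on_univ \<tau>" and A: "openin (restrict_top \<tau> H) A"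
  shows "\<exists>U. openin \<tau> U \<and> A \<inter> H = U \<inter> H"
  using A unfolding restrict_top_def
proof (rule gen_top_induct)
  show "\<exists>U. openin \<tau> U \<and> UNIV \<inter> H = U \<inter> H" using openin_UNIV_top[OF top] by blast
  show "\<exists>U. openin \<tau> U \<and> {} \<inter> H = U \<inter> H" by (intro exI[of _ "{}"]) simp
  show "\<exists>U. openin \<tau> U \<and> a \<inter> b \<inter> H = U \<inter> H"
    if h1: "\<exists>U. openin \<tau> U \<and> a \<inter> H = U \<inter> H" and h2: "\<exists>U. openin \<tau> U \<and> b \<inter> H = U \<inter> H" for a b
  proof -
    obtain U1 where u1: "openin \<tau> U1" "a \<inter> H = U1 \<inter> H" using h1 by (elim exE conjE)
    obtain U2 where u2: "openin \<tau> U2" "b \<inter> H = U2 \<inter> H" using h2 by (elim exE conjE)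
    show ?thesis using u1 u2 by (intro exI[of _ "U1 \<inter> U2"]) (auto intro: openin_Int)
  qed
  show "\<exists>U. openin \<tau> U \<and> \<Union>K \<inter> H = U \<inter> H"
    if H0: "\<And>k. k \<in> K \<Longrightarrow> \<exists>U. openin \<tau> U \<and> k \<inter> H = U \<inter> H" for K
  proof -
    have "\<forall>k\<in>K. \<exists>U. openin \<tau> U \<and> k \<inter> H = U \<inter> H" using H0 by blast
    from bchoice[OF this] obtain g where g0: "\<forall>k\<in>K. openin \<tau> (g k) \<and> k \<inter> H = g k \<inter> H"
      by blast
    then have g: "\<And>k. k \<in> K \<Longrightarrow> openin \<tau> (g k) \<and> k \<inter> H = g k \<inter> H" by blast
    have "openin \<tau> (\<Union>(g ` K))" using g by (auto intro: openin_Union)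
    moreover have "\<Union>K \<inter> H = \<Union>(g ` K) \<inter> H" using g by blast
    ultimately show ?thesis by blast
  qed
  show "\<exists>U. openin \<tau> U \<and> X \<inter> H = U \<inter> H" if "X \<in> {U \<inter> H |U. openin \<tau> U}" for X
    using that by auto
qed

lemma pattern_restrict:
  assumes "length Us = length Ws" "\<And>i. i < length Us \<Longrightarrow> Us ! i \<inter> H = Ws ! i \<inter> H"
  shows "word_pattern Us \<inter> lists H = word_pattern Ws \<inter> lists H"
proof -
  have *: "list_all2 (\<in>) xs Us \<longleftrightarrow> list_all2 (\<in>) xs Ws" if xsH: "set xs \<subseteq> H" for xs
  proof -
    have e: "xs!i \<in> Us!i \<longleftrightarrow> xs!i \<in> Ws!i" if "i < length xs" "length xs = length Us" for i
    proof -
      have "xs!i \<in> H" using that(1) xsH nth_mem by blast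
      moreover have "Us ! i \<inter> H = Ws ! i \<inter> H" using assms(2)[of i] that by simp
      ultimately show ?thesis by blast
    qed
    show ?thesis using assms(1) e unfolding list_all2_conv_all_nth by auto
  qed
  have sH: "set xs \<subseteq> H" if "subseq xs w" "w \<in> lists H" for xs w
    using that by (auto elim: list_emb_set)
  show ?thesis
  proof (intro equalityI subsetI)
    fix w assume "w \<in> word_pattern Us \<inter> lists H"
    then obtain xs where xs: "subseq xs w" "list_all2 (\<in>) xs Us" "w \<in> lists H"
      by (auto simp: word_pattern_def)
    then have "list_all2 (\<in>) xs Ws" using *[OF sH[OF xs(1,3)]] by simp
    then show "w \<in> word_pattern Ws \<inter> lists H" using xs by (auto simp: word_pattern_def)
  next
    fix w assume "w \<in> word_pattern Ws \<inter> lists H"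
    then obtain xs where xs: "subseq xs w" "list_all2 (\<in>) xs Ws" "w \<in> lists H"
      by (auto simp: word_pattern_def)
    then have "list_all2 (\<in>) xs Us" using *[OF sH[OF xs(1,3)]] by simp
    then show "w \<in> word_pattern Us \<inter> lists H" using xs by (auto simp: word_pattern_def)
  qed
qed

lemma sub_transfer:
  assumes tr: "\<And>A. openin \<sigma>1 A \<Longrightarrow> \<exists>B. openin \<sigma>2 B \<and> A \<inter> H = B \<inter> H"
    and V: "openin (subword_topology \<sigma>1) V"
  shows "\<exists>V'. openin (subword_topology \<sigma>2) V' \<and> V \<inter> lists H = V' \<inter> lists H"
proof (rule gen_top_induct[OF V[unfolded subword_topology_def]])
  show "\<exists>V'. openin (subword_topology \<sigma>2) V' \<and> UNIV \<inter> lists H = V' \<inter> lists H"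
    using subword_UNIV by blast
  show "\<exists>V'. openin (subword_topology \<sigma>2) V' \<and> {} \<inter> lists H = V' \<inter> lists H"
    by (intro exI[of _ "{}"]) simp
  show "\<exists>V'. openin (subword_topology \<sigma>2) V' \<and> a \<inter> b \<inter> lists H = V' \<inter> lists H"
    if h1: "\<exists>V'. openin (subword_topology \<sigma>2) V' \<and> a \<inter> lists H = V' \<inter> lists H"
       and h2: "\<exists>V'. openin (subword_topology \<sigma>2) V' \<and> b \<inter> lists H = V' \<inter> lists H" for a b
  proof -
    obtain V1 where "openin (subword_topology \<sigma>2) V1" "a \<inter> lists H = V1 \<inter> lists H"
      using h1 by (elim exE conjE)
    obtain V2 where "openin (subword_topology \<sigma>2) V2" "b \<inter> lists H = V2 \<inter> lists H"
      using h2 by (elim exE conjE)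
    then show ?thesis using \<open>openin (subword_topology \<sigma>2) V1\<close> \<open>a \<inter> lists H = V1 \<inter> lists H\<close>
      by (intro exI[of _ "V1 \<inter> V2"]) (auto intro: openin_Int)
  qed
  show "\<exists>V'. openin (subword_topology \<sigma>2) V' \<and> \<Union>K \<inter> lists H = V' \<inter> lists H"
    if H0: "\<And>k. k \<in> K \<Longrightarrow> \<exists>V'. openin (subword_topology \<sigma>2) V' \<and> k \<inter> lists H = V' \<inter> lists H" for K
  proof -
    have "\<forall>k\<in>K. \<exists>V'. openin (subword_topology \<sigma>2) V' \<and> k \<inter> lists H = V' \<inter> lists H"
      using H0 by blast
    from bchoice[OF this] obtain g where g: "\<forall>k\<in>K. openin (subword_topology \<sigma>2) (g k) \<and> k \<inter> lists H = g k \<inter> lists H"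
      by blast
    have "openin (subword_topology \<sigma>2) (\<Union>(g ` K))" using g by (auto intro: openin_Union)
    moreover have "\<Union>K \<inter> lists H = \<Union>(g ` K) \<inter> lists H" using g by blast
    ultimately show ?thesis by blast
  qed
  show "\<exists>V'. openin (subword_topology \<sigma>2) V' \<and> X \<inter> lists H = V' \<inter> lists H"
    if hX: "X \<in> {word_pattern Us |Us. \<forall>U\<in>set Us. openin \<sigma>1 U}" for X
  proof -
    obtain Us where Us: "X = word_pattern Us" "\<forall>U\<in>set Us. openin \<sigma>1 U" using hX by blast
    obtain g where g: "\<And>A. openin \<sigma>1 A \<Longrightarrow> openin \<sigma>2 (g A) \<and> A \<inter> H = g A \<inter> H" using tr by metis
    define Ws where "Ws = map g Us"
    have "word_pattern Us \<inter> lists H = word_pattern Ws \<inter> lists H"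
      by (rule pattern_restrict) (use Us(2) g in \<open>auto simp: Ws_def\<close>)
    moreover have "\<forall>U\<in>set Ws. openin \<sigma>2 U" using Us(2) g by (auto simp: Ws_def)
    then have "openin (subword_topology \<sigma>2) (word_pattern Ws)"
      unfolding subword_topology_def by (intro gen_top_basis) blast
    ultimately show ?thesis using Us(1) by blast
  qed
qed

lemma upcl_restrict:
  assumes down: "\<And>s t. LE \<theta> s t \<Longrightarrow> t \<in> H \<Longrightarrow> s \<in> H" and eq: "V \<inter> lists H = V' \<inter> lists H"
  shows "upclosure (LE \<theta>) (node_set U V) \<inter> H \<subseteq> upclosure (LE \<theta>) (node_set U V') \<inter> H"
proof
  fix t assume "t \<in> upclosure (LE \<theta>) (node_set U V) \<inter> H"
  then obtain s where s: "s \<in> node_set U V" "LE \<theta> s t" and tH: "t \<in> H" by (auto simp: upclosure_def)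
  obtain b ss where sb: "s = Node b ss" by (cases s)
  have "s \<in> H" using down s(2) tH by blast
  then have "c \<in> H" if "c \<in> set ss" for c using down LE_child[OF that, of \<theta> b] sb by blast
  then have "ss \<in> lists H" by auto
  then have "ss \<in> V'" using s(1) sb eq by auto
  then have "s \<in> node_set U V'" using s(1) sb by auto
  then show "t \<in> upclosure (LE \<theta>) (node_set U V') \<inter> H" using s(2) tH by (auto simp: upclosure_def)
qed

lemma K_gen_UNIV:
  assumes "topspace \<theta> = UNIV"
  shows "UNIV \<in> {upclosure (LE \<theta>) (node_set U V) | U V. openin \<theta> U \<and> openin (subword_topology \<tau>) V}"
proof -
  have "upclosure (LE \<theta>) (node_set UNIV UNIV) = UNIV"
    by (auto simp: upclosure_def node_set_UNIV intro: LE_refl)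
  moreover have "openin \<theta> UNIV" by (metis assms openin_topspace)
  ultimately show ?thesis using subword_UNIV by blast
qed

lemma K_expander_eq:
  assumes th: "topspace \<theta> = UNIV" and top: "top_on_univ \<tau>"
    and c: "coarser \<tau> (K_map \<theta> \<tau>)" and H: "closedin \<tau> H"
  shows "restrict_top (K_map \<theta> \<tau>) H = restrict_top (K_map \<theta> (restrict_top \<tau> H)) H"
proof -
  have "openin \<tau> (UNIV - H)" using H top by (simp add: closedin_def top_on_univ_def)
  then have "openin (K_map \<theta> \<tau>) (UNIV - H)" using c by (simp add: coarser_def)
  then have "upcl (LE \<theta>) (UNIV - H)" by (rule K_upcl)
  then have down: "\<And>s t. LE \<theta> s t \<Longrightarrow> t \<in> H \<Longrightarrow> s \<in> H" unfolding upcl_def by blast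
  have tr1: "\<exists>B. openin (restrict_top \<tau> H) B \<and> A \<inter> H = B \<inter> H" if "openin \<tau> A" for A
    using that unfolding restrict_top_def by (intro exI[of _ "A \<inter> H"]) (auto intro: gen_top_basis)
  have tr2: "\<exists>B. openin \<tau> B \<and> A \<inter> H = B \<inter> H" if "openin (restrict_top \<tau> H) A" for A
    using restrict_open[OF top that] by blast
  let ?G1 = "{upclosure (LE \<theta>) (node_set U V) | U V. openin \<theta> U \<and> openin (subword_topology \<tau>) V}"
  let ?G2 = "{upclosure (LE \<theta>) (node_set U V) | U V. openin \<theta> U \<and> openin (subword_topology (restrict_top \<tau> H)) V}"
  have eqv: "upclosure (LE \<theta>) (node_set U V) \<inter> H = upclosure (LE \<theta>) (node_set U V') \<inter> H"
    if "V \<inter> lists H = V' \<inter> lists H" for U V V'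
  proof (rule equalityI)
    show "upclosure (LE \<theta>) (node_set U V) \<inter> H \<subseteq> upclosure (LE \<theta>) (node_set U V') \<inter> H"
      by (rule upcl_restrict[OF _ that]) (erule (1) down)
    show "upclosure (LE \<theta>) (node_set U V') \<inter> H \<subseteq> upclosure (LE \<theta>) (node_set U V) \<inter> H"
      by (rule upcl_restrict[OF _ that[symmetric]]) (erule (1) down)
  qed
  have seteq: "{W \<inter> H | W. W \<in> ?G1} = {W \<inter> H | W. W \<in> ?G2}"
  proof (intro equalityI subsetI)
    fix X assume "X \<in> {W \<inter> H | W. W \<in> ?G1}"
    then obtain U V where UV: "openin \<theta> U" "openin (subword_topology \<tau>) V"
      "X = upclosure (LE \<theta>) (node_set U V) \<inter> H" by blast
    obtain V' where V': "openin (subword_topology (restrict_top \<tau> H)) V'" "V \<inter> lists H = V' \<inter> lists H"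
      using sub_transfer[OF tr1 UV(2)] by blast
    have X: "X = upclosure (LE \<theta>) (node_set U V') \<inter> H" using UV(3) eqv[OF V'(2)] by simp
    have "upclosure (LE \<theta>) (node_set U V') \<in> ?G2" using UV(1) V'(1) by blast
    then show "X \<in> {W \<inter> H | W. W \<in> ?G2}" using X by blast
  next
    fix X assume "X \<in> {W \<inter> H | W. W \<in> ?G2}"
    then obtain U V where UV: "openin \<theta> U" "openin (subword_topology (restrict_top \<tau> H)) V"
      "X = upclosure (LE \<theta>) (node_set U V) \<inter> H" by blast
    obtain V' where V': "openin (subword_topology \<tau>) V'" "V \<inter> lists H = V' \<inter> lists H"
      using sub_transfer[OF tr2 UV(2)] by blast
    have X: "X = upclosure (LE \<theta>) (node_set U V') \<inter> H" using UV(3) eqv[OF V'(2)] by simp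
    have "upclosure (LE \<theta>) (node_set U V') \<in> ?G1" using UV(1) V'(1) by blast
    then show "X \<in> {W \<inter> H | W. W \<in> ?G1}" using X by blast
  qed
  have r1: "restrict_top (K_map \<theta> \<tau>) H = gen_top {W \<inter> H | W. W \<in> ?G1}"
    unfolding K_map_def by (rule restrict_gen[OF K_gen_UNIV[OF th]])
  have r2: "restrict_top (K_map \<theta> (restrict_top \<tau> H)) H = gen_top {W \<inter> H | W. W \<in> ?G2}"
    unfolding K_map_def by (rule restrict_gen[OF K_gen_UNIV[OF th]])
  show ?thesis by (simp only: r1 r2 seteq)
qed

theorem mainTheorem14:
  fixes \<theta> :: "'a topology"
  assumes "topspace \<theta> = UNIV" and "noetherian \<theta>"
  shows "is_tree_topology \<theta> (tree_topology \<theta>)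
         \<and> least_fixpoint (K_map \<theta>) (tree_topology \<theta>)
         \<and> topology_expander (K_map \<theta>)"
proof (intro conjI)
  show "is_tree_topology \<theta> (tree_topology \<theta>)" by (simp add: tree_topology_eq is_TT)
  show "least_fixpoint (K_map \<theta>) (tree_topology \<theta>)"
    unfolding least_fixpoint_def tree_topology_eq
    by (simp add: top_on_univ_TT K_TT K_fix_least)
  have "refinement_function (K_map \<theta>)"
    unfolding refinement_function_def
  proof (intro conjI allI impI)
    fix \<tau> :: "'a ftree topology"
    show "top_on_univ (K_map \<theta> \<tau>)" by (simp add: K_map_def)
  next
    fix \<tau>1 \<tau>2 :: "'a ftree topology"
    assume "coarser \<tau>1 \<tau>2"
    then show "coarser (K_map \<theta> \<tau>1) (K_map \<theta> \<tau>2)" by (rule K_mono)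
  next
    fix \<tau> :: "'a ftree topology"
    assume "noetherian \<tau>"
    then show "noetherian (K_map \<theta> \<tau>)" by (rule noeth_K[OF assms(2)])
  qed
  moreover have "\<forall>\<tau> H. top_on_univ \<tau> \<longrightarrow> noetherian \<tau> \<longrightarrow> coarser \<tau> (K_map \<theta> \<tau>) \<longrightarrow> closedin \<tau> H \<longrightarrow>
        restrict_top (K_map \<theta> \<tau>) H = restrict_top (K_map \<theta> (restrict_top \<tau> H)) H"
    by (intro allI impI) (rule K_expander_eq[OF assms(1)])
  ultimately show "topology_expander (K_map \<theta>)" unfolding topology_expander_def by blast
qed


end
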